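(* Let $A$ be a threshold graph with $|V(A)|>1$. Then a vertex $t\in V(A)$ is $A$-terminal if and only if $t$ is not $\overline{A}$-terminal. Consequently every two $A$-terminal vertices are nonadjacent, and every two $A$-non-terminal vertices are adjacent.
   Context: A threshold graph is a graph with no induced four-vertex path, four-vertex cycle, or complement of a four-vertex cycle. $\overline{A}$ is the complement graph. In a graph $H$, a vertex $u$ $H$-dominates a vertex $v\ne u$ if $u,v$ are adjacent and every neighbour of $v$ is equal or adjacent to $u$. A vertex $t$ is $H$-non-terminal if there exists $s\in V(H)\setminus\{t\}$ such that $t$ $H$-dominates $s$, and $H$-terminal otherwise. *)

theory Defs
  imports Main
begin

definition simple_graph :: "'a set \<Rightarrow> ('a \<Rightarrow> 'a \<Rightarrow> bool) \<Rightarrow> bool" where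
  "simple_graph V E \<longleftrightarrow> finite V \<and> (\<forall>u v. E u v \<longrightarrow> u \<in> V \<and> v \<in> V) \<and>
     (\<forall>u v. E u v \<longrightarrow> E v u) \<and> (\<forall>v. \<not> E v v)"

definition compl_graph :: "'a set \<Rightarrow> ('a \<Rightarrow> 'a \<Rightarrow> bool) \<Rightarrow> 'a \<Rightarrow> 'a \<Rightarrow> bool" where
  "compl_graph V E u v \<longleftrightarrow> u \<in> V \<and> v \<in> V \<and> u \<noteq> v \<and> \<not> E u v"

definition induced_P4 :: "'a set \<Rightarrow> ('a \<Rightarrow> 'a \<Rightarrow> bool) \<Rightarrow> 'a \<Rightarrow> 'a \<Rightarrow> 'a \<Rightarrow> 'a \<Rightarrow> bool" where
  "induced_P4 V E a b c d \<longleftrightarrow> a \<in> V \<and> b \<in> V \<and> c \<in> V \<and> d \<in> V \<and> distinct [a, b, c, d] \<and>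
     E a b \<and> E b c \<and> E c d \<and> \<not> E a c \<and> \<not> E b d \<and> \<not> E a d"

definition induced_C4 :: "'a set \<Rightarrow> ('a \<Rightarrow> 'a \<Rightarrow> bool) \<Rightarrow> 'a \<Rightarrow> 'a \<Rightarrow> 'a \<Rightarrow> 'a \<Rightarrow> bool" where
  "induced_C4 V E a b c d \<longleftrightarrow> a \<in> V \<and> b \<in> V \<and> c \<in> V \<and> d \<in> V \<and> distinct [a, b, c, d] \<and>
     E a b \<and> E b c \<and> E c d \<and> E d a \<and> \<not> E a c \<and> \<not> E b d"

definition induced_2K2 :: "'a set \<Rightarrow> ('a \<Rightarrow> 'a \<Rightarrow> bool) \<Rightarrow> 'a \<Rightarrow> 'a \<Rightarrow> 'a \<Rightarrow> 'a \<Rightarrow> bool" where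
  "induced_2K2 V E a b c d \<longleftrightarrow> a \<in> V \<and> b \<in> V \<and> c \<in> V \<and> d \<in> V \<and> distinct [a, b, c, d] \<and>
     E a b \<and> E c d \<and> \<not> E a c \<and> \<not> E a d \<and> \<not> E b c \<and> \<not> E b d"

definition threshold_graph :: "'a set \<Rightarrow> ('a \<Rightarrow> 'a \<Rightarrow> bool) \<Rightarrow> bool" where
  "threshold_graph V E \<longleftrightarrow> simple_graph V E \<and>
     (\<forall>a b c d. \<not> induced_P4 V E a b c d \<and> \<not> induced_C4 V E a b c d \<and> \<not> induced_2K2 V E a b c d)"

definition dominates :: "'a set \<Rightarrow> ('a \<Rightarrow> 'a \<Rightarrow> bool) \<Rightarrow> 'a \<Rightarrow> 'a \<Rightarrow> bool" where
  "dominates V E u v \<longleftrightarrow> u \<noteq> v \<and> E u v \<and> (\<forall>w \<in> V. E v w \<longrightarrow> w = u \<or> E u w)"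

definition non_terminal :: "'a set \<Rightarrow> ('a \<Rightarrow> 'a \<Rightarrow> bool) \<Rightarrow> 'a \<Rightarrow> bool" where
  "non_terminal V E t \<longleftrightarrow> (\<exists>s \<in> V - {t}. dominates V E t s)"

definition terminal :: "'a set \<Rightarrow> ('a \<Rightarrow> 'a \<Rightarrow> bool) \<Rightarrow> 'a \<Rightarrow> bool" where
  "terminal V E t \<longleftrightarrow> \<not> non_terminal V E t"

end

theory Submission
  imports Defs
begin

definition ge :: "'a set \<Rightarrow> ('a \<Rightarrow> 'a \<Rightarrow> bool) \<Rightarrow> 'a \<Rightarrow> 'a \<Rightarrow> bool" where
  "ge V E u v \<longleftrightarrow> (\<forall>w\<in>V. E v w \<and> w \<noteq> u \<longrightarrow> E u w)"

lemma total:
  assumes th: "threshold_graph V E" and u: "u \<in> V" and v: "v \<in> V"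
  shows "ge V E u v \<or> ge V E v u"
proof (rule ccontr)
  assume "\<not> ?thesis"
  then obtain x y where x: "x \<in> V" "E v x" "x \<noteq> u" "\<not> E u x"
    and y: "y \<in> V" "E u y" "y \<noteq> v" "\<not> E v y" unfolding ge_def by blast
  have sg: "simple_graph V E" and nf: "\<And>a b c d. \<not> induced_P4 V E a b c d \<and> \<not> induced_C4 V E a b c d \<and> \<not> induced_2K2 V E a b c d"
    using th unfolding threshold_graph_def by auto
  have irr: "\<And>a. \<not> E a a" and sym: "\<And>a b. E a b \<Longrightarrow> E b a" using sg unfolding simple_graph_def by auto
  have "u \<noteq> v" using x y irr sym by metis
  have "x \<noteq> y" using x y sym by metis
  have "x \<noteq> v" "y \<noteq> u" using x y irr by auto
  show False
  proof (cases "E u v")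
    case True
    show False
    proof (cases "E x y")
      case True
      with \<open>E u v\<close> x y \<open>u \<noteq> v\<close> \<open>x \<noteq> y\<close> \<open>x \<noteq> v\<close> \<open>y \<noteq> u\<close> u v sym
      have "induced_C4 V E x v u y" unfolding induced_C4_def by auto
      with nf show False by blast
    next
      case False
      with \<open>E u v\<close> x y \<open>u \<noteq> v\<close> \<open>x \<noteq> y\<close> \<open>x \<noteq> v\<close> \<open>y \<noteq> u\<close> u v sym
      have "induced_P4 V E x v u y" unfolding induced_P4_def by auto
      with nf show False by blast
    qed
  next
    case False
    show False
    proof (cases "E x y")
      case True
      with \<open>\<not> E u v\<close> x y \<open>u \<noteq> v\<close> \<open>x \<noteq> y\<close> \<open>x \<noteq> v\<close> \<open>y \<noteq> u\<close> u v sym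
      have "induced_P4 V E v x y u" unfolding induced_P4_def by auto
      with nf show False by blast
    next
      case False
      with \<open>\<not> E u v\<close> x y \<open>u \<noteq> v\<close> \<open>x \<noteq> y\<close> \<open>x \<noteq> v\<close> \<open>y \<noteq> u\<close> u v sym
      have "induced_2K2 V E v x u y" unfolding induced_2K2_def by auto
      with nf show False by blast
    qed
  qed
qed

lemma card_lt:
  assumes sg: "simple_graph V E" and "ge V E z y" "\<not> ge V E y z" "y \<in> V" "z \<in> V"
  shows "card {w\<in>V. E y w} < card {w\<in>V. E z w}"
proof -
  have fin: "finite V" and irr: "\<And>a. \<not> E a a" and sym: "\<And>a b. E a b \<Longrightarrow> E b a"
    using sg unfolding simple_graph_def by auto
  have sub: "{w\<in>V. E y w} - {z} \<subset> {w\<in>V. E z w} - {y}"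
    using assms(2,3) irr unfolding ge_def by auto
  have "card ({w\<in>V. E y w} - {z}) < card ({w\<in>V. E z w} - {y})"
    by (rule psubset_card_mono) (use fin sub in auto)
  moreover have "E y z \<longleftrightarrow> E z y" using sym by blast
  ultimately show ?thesis using fin assms(4,5)
    by (cases "E y z") (auto simp: card_Diff_singleton_if)
qed

theorem mainTheorem15:
  fixes V :: "'a set" and E :: "'a \<Rightarrow> 'a \<Rightarrow> bool"
  assumes "threshold_graph V E" and "card V > 1"
  shows "(\<forall>t \<in> V. terminal V E t \<longleftrightarrow> \<not> terminal V (compl_graph V E) t)
       \<and> (\<forall>s \<in> V. \<forall>t \<in> V. s \<noteq> t \<longrightarrow> terminal V E s \<longrightarrow> terminal V E t \<longrightarrow> \<not> E s t)
       \<and> (\<forall>s \<in> V. \<forall>t \<in> V. s \<noteq> t \<longrightarrow> non_terminal V E s \<longrightarrow> non_terminal V E t \<longrightarrow> E s t)"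
proof -
  have sg: "simple_graph V E" using assms(1) unfolding threshold_graph_def by auto
  have fin: "finite V" and irr: "\<And>a. \<not> E a a" and sym: "\<And>a b. E a b \<Longrightarrow> E b a"
    and inV: "\<And>a b. E a b \<Longrightarrow> a \<in> V \<and> b \<in> V"
    using sg unfolding simple_graph_def by auto
  have tot: "\<And>u v. u \<in> V \<Longrightarrow> v \<in> V \<Longrightarrow> ge V E u v \<or> ge V E v u" by (rule total[OF assms(1)])
  have ntA: "non_terminal V E t \<longleftrightarrow> (\<exists>s\<in>V. s \<noteq> t \<and> E t s \<and> ge V E t s)" for t
  proof
    assume "non_terminal V E t"
    then obtain s where s: "s \<in> V" "s \<noteq> t" "E t s" and h: "\<forall>w\<in>V. E s w \<longrightarrow> w = t \<or> E t w"
      unfolding non_terminal_def dominates_def by blast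
    have "ge V E t s" unfolding ge_def using h by blast
    with s show "\<exists>s\<in>V. s \<noteq> t \<and> E t s \<and> ge V E t s" by blast
  next
    assume "\<exists>s\<in>V. s \<noteq> t \<and> E t s \<and> ge V E t s"
    then obtain s where s: "s \<in> V" "s \<noteq> t" "E t s" "ge V E t s" by blast
    have "\<forall>w\<in>V. E s w \<longrightarrow> w = t \<or> E t w" using s(4) unfolding ge_def by blast
    with s have "dominates V E t s" unfolding dominates_def by blast
    thus "non_terminal V E t" using s unfolding non_terminal_def by blast
  qed
  have ntC: "non_terminal V (compl_graph V E) t \<longleftrightarrow> (\<exists>s\<in>V. s \<noteq> t \<and> \<not> E t s \<and> ge V E s t)"
    if "t \<in> V" for t
  proof
    assume "non_terminal V (compl_graph V E) t"
    then obtain s where s: "s \<in> V" "s \<noteq> t" "\<not> E t s"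
      and h: "\<forall>w\<in>V. compl_graph V E s w \<longrightarrow> w = t \<or> compl_graph V E t w"
      unfolding non_terminal_def dominates_def compl_graph_def by blast
    have "ge V E s t" unfolding ge_def
    proof (intro ballI impI)
      fix w assume w: "w \<in> V" "E t w \<and> w \<noteq> s"
      show "E s w"
      proof (rule ccontr)
        assume "\<not> E s w"
        hence "compl_graph V E s w" using s w unfolding compl_graph_def by blast
        with h w have "w = t \<or> compl_graph V E t w" by blast
        with w irr show False unfolding compl_graph_def by blast
      qed
    qed
    with s show "\<exists>s\<in>V. s \<noteq> t \<and> \<not> E t s \<and> ge V E s t" by blast
  next
    assume "\<exists>s\<in>V. s \<noteq> t \<and> \<not> E t s \<and> ge V E s t"
    then obtain s where s: "s \<in> V" "s \<noteq> t" "\<not> E t s" "ge V E s t" by blast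
    have "dominates V (compl_graph V E) t s"
      unfolding dominates_def
    proof (intro conjI ballI impI)
      show "t \<noteq> s" using s by blast
      show "compl_graph V E t s" using s that unfolding compl_graph_def by blast
      fix w assume w: "w \<in> V" "compl_graph V E s w"
      show "w = t \<or> compl_graph V E t w"
      proof (cases "w = t")
        case False
        have "\<not> E t w" using s(4) w unfolding ge_def compl_graph_def by blast
        thus ?thesis using False w that unfolding compl_graph_def by blast
      qed simp
    qed
    thus "non_terminal V (compl_graph V E) t" using s unfolding non_terminal_def by blast
  qed
  have p1: "terminal V E t \<longleftrightarrow> \<not> terminal V (compl_graph V E) t" if t: "t \<in> V" for t
  proof
    assume tA: "terminal V E t"
    let ?S = "{s\<in>V. s \<noteq> t \<and> \<not> E t s}"
    have Sne: "?S \<noteq> {}"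
    proof
      assume S0: "?S = {}"
      have "V - {t} \<noteq> {}"
      proof
        assume "V - {t} = {}"
        hence "V \<subseteq> {t}" by blast
        hence "card V \<le> card {t}" by (intro card_mono) auto
        with assms(2) show False by simp
      qed
      then obtain s where s: "s \<in> V" "s \<noteq> t" by blast
      have "E t s" using S0 s by auto
      moreover have "ge V E t s" unfolding ge_def using S0 by auto
      ultimately have "non_terminal V E t" using ntA s by blast
      with tA show False unfolding terminal_def by blast
    qed
    have Sfin: "finite ?S" using fin by auto
    let ?d = "\<lambda>z. card {w\<in>V. E z w}"
    have "Max (?d ` ?S) \<in> ?d ` ?S" using Sne Sfin by (intro Max_in) auto
    then obtain y where y: "y \<in> ?S" "?d y = Max (?d ` ?S)" by auto
    have ymax: "?d z \<le> ?d y" if "z \<in> ?S" for z using y that Sfin by auto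
    have yge: "ge V E y z" if "z \<in> ?S" for z
    proof (rule ccontr)
      assume "\<not> ge V E y z"
      moreover then have "ge V E z y" using tot y that by blast
      ultimately have "?d y < ?d z" using card_lt[OF sg] y that by blast
      with ymax that show False by force
    qed
    have "ge V E y t"
    proof (rule ccontr)
      assume "\<not> ge V E y t"
      then obtain x where x: "x \<in> V" "E t x" "x \<noteq> y" "\<not> E y x" unfolding ge_def by blast
      have "\<not> ge V E t x" using tA ntA x irr unfolding terminal_def by metis
      then obtain z where z: "z \<in> V" "E x z" "z \<noteq> t" "\<not> E t z" unfolding ge_def by blast
      have "z \<in> ?S" using z by auto
      hence "ge V E y z" by (rule yge)
      moreover have "z \<noteq> y" using z x sym by metis
      ultimately have "E y x" using z x sym unfolding ge_def by metis
      with x show False by blast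
    qed
    thus "\<not> terminal V (compl_graph V E) t" using ntC[OF t] y unfolding terminal_def by blast
  next
    assume "\<not> terminal V (compl_graph V E) t"
    then obtain s where s: "s \<in> V" "s \<noteq> t" "\<not> E t s" "ge V E s t"
      using ntC[OF t] unfolding terminal_def by blast
    show "terminal V E t"
    proof (rule ccontr)
      assume "\<not> terminal V E t"
      then obtain r where r: "r \<in> V" "r \<noteq> t" "E t r" "ge V E t r" using ntA unfolding terminal_def by blast
      have "E s r" using s r unfolding ge_def by (metis irr)
      hence "E t s" using r s sym unfolding ge_def by metis
      with s show False by blast
    qed
  qed
  have p2: "\<not> E s t" if "s \<in> V" "t \<in> V" "s \<noteq> t" "terminal V E s" "terminal V E t" for s t
  proof
    assume "E s t"
    from tot[OF that(1,2)] show False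
      using ntA that \<open>E s t\<close> sym unfolding terminal_def by metis
  qed
  have p3: "E s t" if "s \<in> V" "t \<in> V" "s \<noteq> t" "non_terminal V E s" "non_terminal V E t" for s t
  proof (rule ccontr)
    assume ne: "\<not> E s t"
    from tot[OF that(1,2)] show False
    proof
      assume "ge V E s t"
      hence "\<not> terminal V (compl_graph V E) t" using ntC[OF that(2)] that ne sym unfolding terminal_def by metis
      hence "terminal V E t" using p1 that by blast
      with that show False unfolding terminal_def by blast
    next
      assume "ge V E t s"
      hence "\<not> terminal V (compl_graph V E) s" using ntC[OF that(1)] that ne sym unfolding terminal_def by metis
      hence "terminal V E s" using p1 that by blast
      with that show False unfolding terminal_def by blast
    qed
  qed
  show ?thesis using p1 p2 p3 by blast
qed

end
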